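(* Let $\mathcal{Q}\subseteq\mathbb{R}^n$ be a configuration manifold and consider the robotic system $$\mathbf{D}(\mathbf{q})\ddot{\mathbf{q}}+\mathbf{C}(\mathbf{q},\dot{\mathbf{q}})\dot{\mathbf{q}}+\mathbf{G}(\mathbf{q})=\mathbf{B}\mathbf{u},\qquad \mathbf{u}\in\mathbb{R}^m,$$ written in control affine form $\dot{\mathbf{x}}=\mathbf{f}(\mathbf{x})+\mathbf{g}(\mathbf{x})\mathbf{u}$ with $\mathbf{x}=(\mathbf{q},\dot{\mathbf{q}})\in T\mathcal{Q}$, $$\mathbf{f}(\mathbf{x})=\begin{bmatrix}\dot{\mathbf{q}}\\ -\mathbf{D}(\mathbf{q})^{-1}\big(\mathbf{C}(\mathbf{q},\dot{\mathbf{q}})\dot{\mathbf{q}}+\mathbf{G}(\mathbf{q})\big)\end{bmatrix},\qquad \mathbf{g}(\mathbf{x})=\begin{bmatrix}\mathbf{0}\\ \mathbf{D}(\mathbf{q})^{-1}\mathbf{B}\end{bmatrix}.$$ Let $h_0:\mathcal{Q}\to\mathbb{R}$ be continuously differentiable, defining $\mathcal{C}_0=\{\mathbf{q}\in\mathcal{Q}: h_0(\mathbf{q})\ge 0\}$, and suppose there exist a continuously differentiable $\mathbf{k}_0:\mathcal{Q}\to\mathbb{R}^n$ and an extended class $\mathcal{K}_\infty$ function $\alpha$ such that $\nabla h_0(\mathbf{q})\cdot\mathbf{k}_0(\mathbf{q})>-\alpha(h_0(\mathbf{q}))$ for all $\mathbf{q}\in\mathcal{Q}$. Fix $\mu>0$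 and define $$h(\mathbf{q},\dot{\mathbf{q}})=h_0(\mathbf{q})-\frac{1}{2\mu}(\dot{\mathbf{q}}-\mathbf{k}_0(\mathbf{q}))^\top\mathbf{D}(\mathbf{q})(\dot{\mathbf{q}}-\mathbf{k}_0(\mathbf{q})),\qquad \mathcal{C}=\{(\mathbf{q},\dot{\mathbf{q}})\in T\mathcal{Q}: h(\mathbf{q},\dot{\mathbf{q}})\ge0\}.$$ If the system is fully actuated ($m=n$ and $\mathbf{B}$ invertible), then $h$ is a control barrier function for the control affine system $\dot{\mathbf{x}}=\mathbf{f}(\mathbf{x})+\mathbf{g}(\mathbf{x})\mathbf{u}$ on $\mathcal{C}$.
   Context: $\mathbf{D}(\mathbf{q})\in\mathbb{R}^{n\times n}$ is the positive definite inertia matrix (assumed continuously differentiable in $\mathbf{q}$), $\mathbf{C}$ the Coriolis matrix, $\mathbf{G}$ the gravity/potential term, $\mathbf{B}\in\mathbb{R}^{n\times m}$ the actuation matrix. A continuous function $\alpha:\mathbb{R}\to\mathbb{R}$ is extended class $\mathcal{K}_\infty$ if $\alpha(0)=0$, $\alpha$ is strictly increasing and $\lim_{s\to\pm\infty}\alpha(s)=\pm\infty$. For a scalar $h$, $L_{\mathbf{f}}h(\mathbf{x})=\nabla h(\mathbf{x})\cdot\mathbf{f}(\mathbf{x})$ and $L_{\mathbf{g}}h(\mathbf{x})=\nabla h(\mathbf{x})^\top\mathbf{g}(\mathbf{x})$. A continuously differentiable $h$ defining $\mathcal{C}=\{h\ge0\}$ is a control barrier function (CBF) for $\dot{\mathbf{x}}=\mathbf{f}(\mathbf{x})+\mathbf{g}(\mathbf{x})\mathbf{u}$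 on $\mathcal{C}$ if there exists an extended class $\mathcal{K}_\infty$ function $\alpha$ such that for all states $\mathbf{x}$: $\sup_{\mathbf{u}\in\mathbb{R}^m}\{L_{\mathbf{f}}h(\mathbf{x})+L_{\mathbf{g}}h(\mathbf{x})\mathbf{u}\}>-\alpha(h(\mathbf{x}))$. *)

theory Defs
  imports "HOL-Analysis.Analysis"
begin

definition C1_on :: "'a::real_normed_vector set \<Rightarrow> ('a \<Rightarrow> 'b::real_normed_vector) \<Rightarrow> bool" where
  "C1_on S F \<longleftrightarrow> (\<exists>F'. (\<forall>x\<in>S. (F has_derivative blinfun_apply (F' x)) (at x)) \<and> continuous_on S F')"

definition ext_class_Kinf :: "(real \<Rightarrow> real) \<Rightarrow> bool" where
  "ext_class_Kinf \<alpha> \<longleftrightarrow> continuous_on UNIV \<alpha> \<and> \<alpha> 0 = 0 \<and> strict_mono \<alpha> \<and>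
     filterlim \<alpha> at_top at_top \<and> filterlim \<alpha> at_bot at_bot"

definition pos_def_mat :: "real^'n^'n \<Rightarrow> bool" where
  "pos_def_mat M \<longleftrightarrow> transpose M = M \<and> (\<forall>v. v \<noteq> 0 \<longrightarrow> v \<bullet> (M *v v) > 0)"

text \<open>L_f h(x) = Dh(x)(f x),
L_g h(x) u = Dh(x)(g x u); the supremum over u is taken in the extended reals.\<close>
definition cbf_on ::
  "'x::real_normed_vector set \<Rightarrow> 'x set \<Rightarrow> ('x \<Rightarrow> real) \<Rightarrow> ('x \<Rightarrow> 'x) \<Rightarrow> ('x \<Rightarrow> 'u \<Rightarrow> 'x) \<Rightarrow> bool" where
  "cbf_on X C h f g \<longleftrightarrow> C1_on X h \<and> C = {x\<in>X. h x \<ge> 0} \<and>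
     (\<exists>\<alpha>. ext_class_Kinf \<alpha> \<and>
        (\<forall>x\<in>X. (SUP u. ereal (frechet_derivative h (at x) (f x) + frechet_derivative h (at x) (g x u)))
                 > ereal (- \<alpha> (h x))))"

end

theory Submission
  imports Defs
begin

lemma bb_mv: "bounded_bilinear (\<lambda>(A::real^'n^'n) (v::real^'n). A *v v)"
proof -
  have "bilinear (\<lambda>(A::real^'n^'n) (v::real^'n). A *v v)"
    unfolding bilinear_def
    by (auto intro!: linearI simp: matrix_vector_mult_add_rdistrib matrix_vector_right_distrib
        matrix_vector_mult_scaleR vec_eq_iff matrix_vector_mult_def sum_distrib_left sum.distrib algebra_simps)
  then show ?thesis by (simp add: bilinear_conv_bounded_bilinear)
qed

lemma C1_cont: "C1_on S f \<Longrightarrow> continuous_on S f"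
  unfolding C1_on_def
  by (metis continuous_at_imp_continuous_on has_derivative_continuous)

lemma C1_bilinear:
  fixes prod :: "'a::real_normed_vector \<Rightarrow> 'b::real_normed_vector \<Rightarrow> 'c::real_normed_vector"
    and f :: "'x::real_normed_vector \<Rightarrow> 'a" and g :: "'x \<Rightarrow> 'b"
  assumes bb: "bounded_bilinear prod" and f: "C1_on S f" and g: "C1_on S g"
  shows "C1_on S (\<lambda>x. prod (f x) (g x))"
proof -
  interpret bounded_bilinear prod by fact
  obtain F' where F: "\<forall>x\<in>S. (f has_derivative blinfun_apply (F' x)) (at x)" "continuous_on S F'"
    using f unfolding C1_on_def by blast
  obtain G' where G: "\<forall>x\<in>S. (g has_derivative blinfun_apply (G' x)) (at x)" "continuous_on S G'"
    using g unfolding C1_on_def by blast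
  have cf: "continuous_on S f" and cg: "continuous_on S g" using f g C1_cont by auto
  show ?thesis unfolding C1_on_def
  proof (intro exI conjI ballI)
    fix x assume x: "x \<in> S"
    have "((\<lambda>x. prod (f x) (g x)) has_derivative (\<lambda>h. prod (f x) (blinfun_apply (G' x) h) + prod (blinfun_apply (F' x) h) (g x))) (at x)"
      using F(1) G(1) x by (intro FDERIV) auto
    then show "((\<lambda>x. prod (f x) (g x)) has_derivative
      blinfun_apply ((prod_right (f x) o\<^sub>L G' x) + (prod_left (g x) o\<^sub>L F' x))) (at x)"
      by (simp add: plus_blinfun.rep_eq)
  next
    show "continuous_on S (\<lambda>x. (prod_right (f x) o\<^sub>L G' x) + (prod_left (g x) o\<^sub>L F' x))"
      using F(2) G(2) cf cg by (intro continuous_intros) auto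
  qed
qed

lemma C1_add:
  assumes f: "C1_on S f" and g: "C1_on S g"
  shows "C1_on S (\<lambda>x. f x + g x)"
proof -
  obtain F' where F: "\<forall>x\<in>S. (f has_derivative blinfun_apply (F' x)) (at x)" "continuous_on S F'"
    using f unfolding C1_on_def by blast
  obtain G' where G: "\<forall>x\<in>S. (g has_derivative blinfun_apply (G' x)) (at x)" "continuous_on S G'"
    using g unfolding C1_on_def by blast
  show ?thesis unfolding C1_on_def
    apply (rule exI[where x="\<lambda>x. F' x + G' x"])
    using F G by (auto intro!: continuous_intros derivative_eq_intros simp: plus_blinfun.rep_eq)
qed

lemma C1_minus:
  assumes f: "C1_on S f"
  shows "C1_on S (\<lambda>x. - f x)"
proof -
  obtain F' where F: "\<forall>x\<in>S. (f has_derivative blinfun_apply (F' x)) (at x)" "continuous_on S F'"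
    using f unfolding C1_on_def by blast
  show ?thesis unfolding C1_on_def
    apply (rule exI[where x="\<lambda>x. - F' x"])
    using F by (auto intro!: continuous_intros derivative_eq_intros simp: uminus_blinfun.rep_eq)
qed

lemma C1_diff:
  assumes f: "C1_on S f" and g: "C1_on S g"
  shows "C1_on S (\<lambda>x. f x - g x)"
  using C1_add[OF f C1_minus[OF g]] by simp

lemma C1_const: "C1_on S (\<lambda>x. c)"
  unfolding C1_on_def
  by (rule exI[where x="\<lambda>x. 0"]) (auto intro!: derivative_eq_intros)

lemma C1_fst:
  fixes f :: "'a::real_normed_vector \<Rightarrow> 'b::real_normed_vector"
  assumes f: "C1_on Q f"
  shows "C1_on (Q \<times> UNIV) (\<lambda>x. f (fst x))"
proof -
  obtain F' where F: "\<forall>x\<in>Q. (f has_derivative blinfun_apply (F' x)) (at x)" "continuous_on Q F'"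
    using f unfolding C1_on_def by blast
  show ?thesis unfolding C1_on_def
  proof (intro exI conjI ballI)
    fix x :: "'a \<times> 'c" assume x: "x \<in> Q \<times> UNIV"
    have "((f \<circ> fst) has_derivative (blinfun_apply (F' (fst x)) \<circ> fst)) (at x)"
      using F(1) x by (intro diff_chain_at has_derivative_fst[OF has_derivative_ident]) auto
    then have d: "((\<lambda>x. f (fst x)) has_derivative (\<lambda>y. blinfun_apply (F' (fst x)) (fst y))) (at x)" by (simp add: o_def)
    have eq: "blinfun_apply (F' (fst x) o\<^sub>L fst_blinfun) = (\<lambda>y. blinfun_apply (F' (fst x)) (fst y))"
      by (rule ext) simp
    show "((\<lambda>x. f (fst x)) has_derivative blinfun_apply (F' (fst x) o\<^sub>L fst_blinfun)) (at x)"
      unfolding eq by (rule d)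
  next
    show "continuous_on (Q \<times> UNIV) (\<lambda>x. F' (fst x) o\<^sub>L (fst_blinfun :: ('a \<times> 'c) \<Rightarrow>\<^sub>L 'a))"
      by (intro continuous_intros continuous_on_compose2[OF F(2)]) auto
  qed
qed

lemma C1_snd: "C1_on S snd"
  unfolding C1_on_def
  by (rule exI[where x="\<lambda>x. snd_blinfun"]) (auto intro!: derivative_eq_intros continuous_intros)

lemma has_derivative_fst_comp:
  assumes "(f has_derivative f') (at (fst x))"
  shows "((\<lambda>x. f (fst x)) has_derivative (\<lambda>y. f' (fst y))) (at x)"
proof -
  have "((f \<circ> fst) has_derivative (f' \<circ> fst)) (at x)"
    using assms by (intro diff_chain_at has_derivative_fst[OF has_derivative_ident]) auto
  then show ?thesis by (simp add: o_def)
qed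

lemma inv_right: "invertible (A::real^'n^'n) \<Longrightarrow> A ** matrix_inv A = mat 1"
  unfolding invertible_def matrix_inv_def by (rule someI_ex[THEN conjunct1])

lemma posdef_invertible: "pos_def_mat (A::real^'n^'n) \<Longrightarrow> invertible A"
  unfolding invertible_left_inverse matrix_left_invertible_ker pos_def_mat_def
  by (metis inner_zero_right less_irrefl)

lemma posdef_sym: "pos_def_mat (A::real^'n^'n) \<Longrightarrow> w \<bullet> (A *v e) = e \<bullet> (A *v w)"
proof -
  assume "pos_def_mat A"
  then have t: "transpose A = A" by (simp add: pos_def_mat_def)
  have "e \<bullet> (A *v w) = (e v* A) \<bullet> w" by (simp add: dot_lmul_matrix)
  also have "e v* A = transpose A *v e" by simp
  finally show ?thesis using t by (simp add: inner_commute)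
qed

theorem lemma4:
  fixes Q :: "(real^'n) set"
    and D :: "real^'n \<Rightarrow> real^'n^'n"
    and Cor :: "real^'n \<Rightarrow> real^'n \<Rightarrow> real^'n^'n"
    and G :: "real^'n \<Rightarrow> real^'n"
    and B :: "real^'n^'n"
    and h0 :: "real^'n \<Rightarrow> real"
    and k0 :: "real^'n \<Rightarrow> real^'n"
    and \<alpha> :: "real \<Rightarrow> real"
    and \<mu> :: real
  assumes "open Q"
    and "\<forall>q\<in>Q. pos_def_mat (D q)"
    and "C1_on Q D"
    and "C1_on Q h0"
    and "C1_on Q k0"
    and "ext_class_Kinf \<alpha>"
    and "\<forall>q\<in>Q. frechet_derivative h0 (at q) (k0 q) > - \<alpha> (h0 q)"
    and "\<mu> > 0"
    and "invertible B"
  shows "cbf_on (Q \<times> UNIV)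
           {x \<in> Q \<times> UNIV. h0 (fst x) - (1 / (2 * \<mu>)) * ((snd x - k0 (fst x)) \<bullet> (D (fst x) *v (snd x - k0 (fst x)))) \<ge> 0}
           (\<lambda>x. h0 (fst x) - (1 / (2 * \<mu>)) * ((snd x - k0 (fst x)) \<bullet> (D (fst x) *v (snd x - k0 (fst x)))))
           (\<lambda>x. (snd x, - (matrix_inv (D (fst x)) *v (Cor (fst x) (snd x) *v snd x + G (fst x)))))
           (\<lambda>x u. (0, matrix_inv (D (fst x)) *v (B *v u)))"
proof -
  note A = assms
  define c where "c = 1 / (2 * \<mu>)"
  have c0: "c > 0" using A(8) by (simp add: c_def)
  define H where "H = (\<lambda>x::(real^'n) \<times> (real^'n). h0 (fst x) - (1 / (2 * \<mu>)) * ((snd x - k0 (fst x)) \<bullet> (D (fst x) *v (snd x - k0 (fst x)))))"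
  obtain H0' where H0': "\<forall>x\<in>Q. (h0 has_derivative blinfun_apply (H0' x)) (at x)"
    using A(4) unfolding C1_on_def by blast
  obtain K0' where K0': "\<forall>x\<in>Q. (k0 has_derivative blinfun_apply (K0' x)) (at x)"
    using A(5) unfolding C1_on_def by blast
  obtain D' where D': "\<forall>x\<in>Q. (D has_derivative blinfun_apply (D' x)) (at x)"
    using A(3) unfolding C1_on_def by blast
  have C1e: "C1_on (Q \<times> UNIV) (\<lambda>x::(real^'n) \<times> (real^'n). snd x - k0 (fst x))"
    by (rule C1_diff[OF C1_snd C1_fst[OF A(5)]])
  have C1Mv: "C1_on (Q \<times> UNIV) (\<lambda>x::(real^'n) \<times> (real^'n). D (fst x) *v (snd x - k0 (fst x)))"
    using C1_bilinear[OF bb_mv C1_fst[OF A(3)] C1e] by simp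
  have C1i: "C1_on (Q \<times> UNIV) (\<lambda>x::(real^'n) \<times> (real^'n). (snd x - k0 (fst x)) \<bullet> (D (fst x) *v (snd x - k0 (fst x))))"
    using C1_bilinear[OF bounded_bilinear_inner C1e C1Mv] by simp
  have C1H: "C1_on (Q \<times> UNIV) H"
    unfolding H_def
    by (rule C1_diff[OF C1_fst[OF A(4)] C1_bilinear[OF bounded_bilinear_mult C1_const C1i]])
  have main: "(SUP u. ereal (frechet_derivative H (at x) (snd x, - (matrix_inv (D (fst x)) *v (Cor (fst x) (snd x) *v snd x + G (fst x))))
        + frechet_derivative H (at x) (0, matrix_inv (D (fst x)) *v (B *v u)))) > ereal (- \<alpha> (H x))"
    if x: "x \<in> Q \<times> UNIV" for x
  proof -
    obtain q v where xqv: "x = (q, v)" by (cases x)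
    have q: "q \<in> Q" using x xqv by auto
    define e where "e = v - k0 q"
    define L where "L = (\<lambda>y::(real^'n) \<times> (real^'n). H0' q (fst y) - c * ((snd y - K0' q (fst y)) \<bullet> (D q *v e)
       + e \<bullet> (D' q (fst y) *v e + D q *v (snd y - K0' q (fst y)))))"
    have ed: "((\<lambda>x::(real^'n) \<times> (real^'n). snd x - k0 (fst x)) has_derivative (\<lambda>y. snd y - K0' q (fst y))) (at x)"
      using K0'[rule_format, OF q]
      by (auto simp: xqv intro!: derivative_eq_intros has_derivative_fst_comp)
    have Dd: "((\<lambda>x::(real^'n) \<times> (real^'n). D (fst x)) has_derivative (\<lambda>y. D' q (fst y))) (at x)"
      using D'[rule_format, OF q] by (auto simp: xqv intro!: has_derivative_fst_comp)
    have mvd: "((\<lambda>x::(real^'n) \<times> (real^'n). D (fst x) *v (snd x - k0 (fst x))) has_derivative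
       (\<lambda>y. D' q (fst y) *v e + D q *v (snd y - K0' q (fst y)))) (at x)"
      using bounded_bilinear.FDERIV[OF bb_mv Dd ed] by (simp add: xqv e_def add.commute)
    have hd: "(H has_derivative L) (at x)"
      unfolding H_def L_def c_def[symmetric]
      using H0'[rule_format, OF q] K0'[rule_format, OF q] ed mvd
      by (auto simp: xqv e_def add.commute intro!: derivative_eq_intros has_derivative_fst_comp)
    have fd: "frechet_derivative H (at x) = L" using frechet_derivative_at[OF hd] by simp
    have pd: "pos_def_mat (D q)" using A(2) q by auto
    have Dinv: "D q *v (matrix_inv (D q) *v w) = w" for w
      using inv_right[OF posdef_invertible[OF pd]] by (simp add: matrix_vector_mul_assoc)
    have Lg: "L (0, matrix_inv (D q) *v w) = - 2 * c * (e \<bullet> w)" for w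
      using posdef_sym[OF pd, of "matrix_inv (D q) *v w" e] by (simp add: L_def Dinv algebra_simps)
    define A0 where "A0 = L (v, - (matrix_inv (D q) *v (Cor q v *v v + G q)))"
    show ?thesis
    proof (cases "e = 0")
      case True
      have "A0 = H0' q (k0 q)" using True by (simp add: A0_def L_def e_def)
      moreover have "H x = h0 q" using True by (simp add: H_def xqv e_def)
      moreover have "H0' q (k0 q) > - \<alpha> (h0 q)"
        using A(7) q frechet_derivative_at[OF H0'[rule_format, OF q]] by auto
      ultimately have "ereal (- \<alpha> (H x)) < ereal (A0 + L (0, matrix_inv (D q) *v (B *v 0)))"
        using Lg[of "B *v 0"] by simp
      then show ?thesis unfolding less_SUP_iff fd by (auto simp: xqv A0_def intro!: exI[where x=0] simp del: matrix_vector_mult_0_right)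
    next
      case False
      have ee: "e \<bullet> e > 0" using False by simp
      define s where "s = - (\<bar>A0\<bar> + \<bar>\<alpha> (H x)\<bar> + 1) / (2 * c * (e \<bullet> e))"
      define u where "u = s *\<^sub>R (matrix_inv B *v e)"
      have Bu: "B *v u = s *\<^sub>R e" unfolding u_def
        using inv_right[OF A(9)] by (simp add: matrix_vector_mul_assoc matrix_vector_mult_scaleR)
      have "- 2 * c * (e \<bullet> (s *\<^sub>R e)) = (\<bar>A0\<bar> + \<bar>\<alpha> (H x)\<bar> + 1)"
        using ee c0 by (simp add: s_def field_simps)
      then have "ereal (- \<alpha> (H x)) < ereal (A0 + L (0, matrix_inv (D q) *v (B *v u)))"
        unfolding Bu Lg by simp
      then show ?thesis unfolding less_SUP_iff fd by (auto simp: xqv A0_def intro!: exI[where x=u])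
    qed
  qed
  show ?thesis
    unfolding cbf_on_def H_def[symmetric]
    using C1H main A(6) by (auto simp: H_def)
qed

end
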